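(* Suppose Assumption (A1) holds and, in addition, $A$ is $\rho$-strongly monotone w.r.t. $S$ for some $\rho>0$, i.e. $\langle u-v,x-y\rangle\ge\rho\|x-y\|_S^2$ for all $(x,u),(y,v)\in\operatorname{gra}A$. Assume $\bar L:=\sup_k L_k<1$ and that there exist $\varepsilon_1,\varepsilon_2>0$ and $t>0$ such that for every integer $k\ge1$: $\gamma_k<1/\varepsilon_1$, $$t\Big(1+\frac{L_k}{\varepsilon_2}\Big)\le 2\gamma_k\rho(1-\gamma_k\varepsilon_1),\qquad t\,L_k(\varepsilon_2+1)\le \kappa_k+\nu_k,$$ where $\kappa_k=1-L_{k-1}-L_k-2\gamma_kL_k\mu-\gamma_k^2\mu^2-\frac{\gamma_k\beta}{2}$ and $\nu_k=2\gamma_k^2\rho\mu^2\big(\gamma_k-\frac1{\varepsilon_1}\big)$. Let $x^*\in\operatorname{zer}(A+B+C)$. Then for any $x_0,u_0\in\mathcal H$ the sequences generated by Algorithm NFBHF-M satisfy, for all $k\ge1$, $$(1-L_k)\|x_{k+1}-x^*\|_S^2\le\frac{\Phi_1(x^* )}{(1+t)^k},$$ where $\Phi_1(x^* )=\|x_1-x^*\|_S^2+2\langle u_1,x_1-x^*\rangle+L_0\|y_0-x_0\|_S^2$; in particular $\{x_k\}$ converges $R$-linearly to $x^*$.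
   Context: $\mathcal H$ is a real Hilbert space. $\mathcal P(\mathcal H)$ denotes the set of bounded linear operators $S:\mathcal H\to\mathcal H$ that are self-adjoint and strongly positive ($\langle Sx,x\rangle\ge m\|x\|^2$ for some $m>0$ and all $x$); for such $S$, $S^{-1}\in\mathcal P(\mathcal H)$, $\langle x,y\rangle_S:=\langle Sx,y\rangle$ and $\|x\|_S:=\sqrt{\langle Sx,x\rangle}$. For $S\in\mathcal P(\mathcal H)$, a single-valued $T:\mathcal H\to\mathcal H$ is $L$-Lipschitz continuous w.r.t. $S$ if $\|Tx-Ty\|_{S^{-1}}\le L\|x-y\|_S$ for all $x,y$, and is $\beta^{-1}$-cocoercive w.r.t. $S$ ($\beta>0$) if $\langle Tx-Ty,x-y\rangle\ge \beta^{-1}\|Tx-Ty\|_{S^{-1}}^2$ for all $x,y$. $\operatorname{gra}A=\{(x,u):u\in Ax\}$; $\operatorname{zer}(A+B+C)=\{x\in\mathcal H: 0\in Ax+Bx+Cx\}$. Assumption (A1): fix $S\in\mathcal P(\mathcal H)$. (i) $A:\mathcal H\to2^{\mathcal H}$ is maximally monotone; (ii) $B:\mathcal H\to\mathcal H$ is single-valued, monotone and $\mu$-Lipschitz continuous w.r.t. $S$ ($\mu\ge0$); (iii) $C:\mathcal H\to\mathcal H$ is $\beta^{-1}$-cocoercive w.r.t. $S$ for some $\beta>0$; (iv) $\operatorname{zer}(A+B+C)\neq\emptyset$; (v) there is $\gamma>0$ and, for each $k\in\mathbb N$, a step-size $\gamma_k\ge\gamma$, a constant $L_k\in[0,1)$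 and a (possibly nonlinear) operator $M_k:\mathcal H\to\mathcal H$ such that $\gamma_kM_k-S$ is $L_k$-Lipschitz continuous w.r.t. $S$. (Under (v), $(M_k+A)^{-1}$ is single-valued with full domain.) Algorithm NFBHF-M: given $x_0,u_0\in\mathcal H$, for $k=0,1,2,\dots$ $$y_k=(M_k+A)^{-1}\big(M_kx_k-(B+C)x_k+\gamma_k^{-1}u_k\big),\quad x_{k+1}=y_k-\gamma_kS^{-1}By_k+\gamma_kS^{-1}Bx_k,\quad u_{k+1}=(\gamma_kM_k-S)y_k-(\gamma_kM_k-S)x_k.$$ *)

theory Defs
  imports "HOL-Analysis.Analysis"
begin

definition self_adjoint :: "('a::real_inner \<Rightarrow> 'a) \<Rightarrow> bool" where
  "self_adjoint S \<longleftrightarrow> (\<forall>x y. inner (S x) y = inner x (S y))"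

definition strongly_pos_op :: "('a::{real_inner,complete_space} \<Rightarrow> 'a) \<Rightarrow> bool" where
  "strongly_pos_op S \<longleftrightarrow> bounded_linear S \<and> self_adjoint S \<and>
     (\<exists>m>0. \<forall>x. inner (S x) x \<ge> m * (norm x)\<^sup>2)"

definition inner_S :: "('a::real_inner \<Rightarrow> 'a) \<Rightarrow> 'a \<Rightarrow> 'a \<Rightarrow> real" where
  "inner_S S x y = inner (S x) y"

definition norm_S :: "('a::real_inner \<Rightarrow> 'a) \<Rightarrow> 'a \<Rightarrow> real" where
  "norm_S S x = sqrt (inner (S x) x)"

text \<open>Inverse operator S^{-1} (S is bijective when strongly positive).\<close>
definition op_inv :: "('a \<Rightarrow> 'a) \<Rightarrow> 'a \<Rightarrow> 'a" where
  "op_inv S = inv S"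

definition lipschitz_wrt :: "('a::real_inner \<Rightarrow> 'a) \<Rightarrow> real \<Rightarrow> ('a \<Rightarrow> 'a) \<Rightarrow> bool" where
  "lipschitz_wrt S L T \<longleftrightarrow> (\<forall>x y. norm_S (op_inv S) (T x - T y) \<le> L * norm_S S (x - y))"

definition cocoercive_wrt :: "('a::real_inner \<Rightarrow> 'a) \<Rightarrow> real \<Rightarrow> ('a \<Rightarrow> 'a) \<Rightarrow> bool" where
  "cocoercive_wrt S \<beta> T \<longleftrightarrow> \<beta> > 0 \<and>
     (\<forall>x y. inner (T x - T y) (x - y) \<ge> (1 / \<beta>) * (norm_S (op_inv S) (T x - T y))\<^sup>2)"

definition gra :: "('a \<Rightarrow> 'b set) \<Rightarrow> ('a \<times> 'b) set" where
  "gra A = {(x, u). u \<in> A x}"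

definition monotone_op :: "('a::real_inner \<Rightarrow> 'a set) \<Rightarrow> bool" where
  "monotone_op A \<longleftrightarrow> (\<forall>(x,u)\<in>gra A. \<forall>(y,v)\<in>gra A. inner (u - v) (x - y) \<ge> 0)"

definition maximally_monotone :: "('a::real_inner \<Rightarrow> 'a set) \<Rightarrow> bool" where
  "maximally_monotone A \<longleftrightarrow> monotone_op A \<and>
     (\<forall>x u. (\<forall>(y,v)\<in>gra A. inner (u - v) (x - y) \<ge> 0) \<longrightarrow> u \<in> A x)"

definition monotone_single :: "('a::real_inner \<Rightarrow> 'a) \<Rightarrow> bool" where
  "monotone_single B \<longleftrightarrow> (\<forall>x y. inner (B x - B y) (x - y) \<ge> 0)"

definition strongly_monotone_wrt :: "('a::real_inner \<Rightarrow> 'a) \<Rightarrow> real \<Rightarrow> ('a \<Rightarrow> 'a set) \<Rightarrow> bool" where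
  "strongly_monotone_wrt S \<rho> A \<longleftrightarrow>
     (\<forall>(x,u)\<in>gra A. \<forall>(y,v)\<in>gra A. inner (u - v) (x - y) \<ge> \<rho> * (norm_S S (x - y))\<^sup>2)"

definition zer3 :: "('a::real_vector \<Rightarrow> 'a set) \<Rightarrow> ('a \<Rightarrow> 'a) \<Rightarrow> ('a \<Rightarrow> 'a) \<Rightarrow> 'a set" where
  "zer3 A B C = {x. \<exists>a\<in>A x. a + B x + C x = 0}"

text \<open>Sequences generated by NFBHF-M: the resolvent step y_k = (M_k + A)^{-1}(w_k)
  is expressed as  w_k \<in> M_k y_k + A y_k, i.e.  w_k - M_k y_k \<in> A y_k.\<close>
definition NFBHF_M :: "('a::real_inner \<Rightarrow> 'a) \<Rightarrow> ('a \<Rightarrow> 'a set) \<Rightarrow> ('a \<Rightarrow> 'a) \<Rightarrow> ('a \<Rightarrow> 'a)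
    \<Rightarrow> (nat \<Rightarrow> real) \<Rightarrow> (nat \<Rightarrow> 'a \<Rightarrow> 'a) \<Rightarrow> 'a \<Rightarrow> 'a
    \<Rightarrow> (nat \<Rightarrow> 'a) \<Rightarrow> (nat \<Rightarrow> 'a) \<Rightarrow> (nat \<Rightarrow> 'a) \<Rightarrow> bool" where
  "NFBHF_M S A B C \<gamma> M x0 u0 x y u \<longleftrightarrow>
     x 0 = x0 \<and> u 0 = u0 \<and>
     (\<forall>k. (M k (x k) - (B (x k) + C (x k)) + (1 / \<gamma> k) *\<^sub>R u k) - M k (y k) \<in> A (y k)
        \<and> x (Suc k) = y k - \<gamma> k *\<^sub>R op_inv S (B (y k)) + \<gamma> k *\<^sub>R op_inv S (B (x k))
        \<and> u (Suc k) = (\<gamma> k *\<^sub>R M k (y k) - S (y k)) - (\<gamma> k *\<^sub>R M k (x k) - S (x k)))"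

end

theory Submission
  imports Defs
begin


lemma spo_facts:
  assumes "strongly_pos_op S"
  shows "bounded_linear S" "\<And>x y. inner (S x) y = inner x (S y)" "\<exists>m>0. \<forall>x. inner (S x) x \<ge> m * (norm x)\<^sup>2"
  using assms unfolding strongly_pos_op_def self_adjoint_def by auto

lemma norm_diff_scale_sq: "(norm (z - a *\<^sub>R w))\<^sup>2 = (norm z)\<^sup>2 - 2 * a * inner w z + a^2 * (norm (w::'a::real_inner))\<^sup>2"
  unfolding power2_norm_eq_inner
  by (simp add: inner_diff_left inner_diff_right inner_commute[of z w] power2_eq_square algebra_simps)

lemma spo_surj:
  fixes S :: "'a::{real_inner,complete_space} \<Rightarrow> 'a"
  assumes "strongly_pos_op S"
  shows "surj S"
proof -
  note F = spo_facts[OF assms]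
  interpret bl: bounded_linear S by (rule F(1))
  obtain m where m: "m > 0" "\<And>x. inner (S x) x \<ge> m * (norm x)\<^sup>2" using F(3) by auto
  obtain K where K: "K > 0" "\<And>x. norm (S x) \<le> norm x * K" using bl.pos_bounded by auto
  define \<alpha> where "\<alpha> = m / K^2"
  define c where "c = sqrt (max 0 (1 - m^2/K^2))"
  have c0: "0 \<le> c" unfolding c_def by simp
  have "m^2/K^2 > 0" using m K by simp
  then have "max 0 (1 - m^2/K^2) < 1" by simp
  then have c1: "c < 1" unfolding c_def using real_sqrt_less_mono[of "max 0 (1 - m^2/K^2)" 1] by simp
  have contr: "norm (z - \<alpha> *\<^sub>R S z) \<le> c * norm z" for z
  proof -
    have "(norm (z - \<alpha> *\<^sub>R S z))\<^sup>2 = (norm z)\<^sup>2 - 2 * \<alpha> * inner (S z) z + \<alpha>^2 * (norm (S z))\<^sup>2"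
      by (rule norm_diff_scale_sq)
    also have "\<dots> \<le> (norm z)\<^sup>2 - 2 * \<alpha> * (m * (norm z)\<^sup>2) + \<alpha>^2 * (norm z * K)\<^sup>2"
    proof -
      have a0: "\<alpha> > 0" unfolding \<alpha>_def using m K by simp
      have "2 * \<alpha> * (m * (norm z)\<^sup>2) \<le> 2 * \<alpha> * inner (S z) z" using m(2)[of z] a0 by simp
      moreover have "(norm (S z))\<^sup>2 \<le> (norm z * K)\<^sup>2" using K(2)[of z] by (simp add: power_mono)
      then have "\<alpha>^2 * (norm (S z))\<^sup>2 \<le> \<alpha>^2 * (norm z * K)\<^sup>2" by (simp add: mult_left_mono)
      ultimately show ?thesis by linarith
    qed
    also have "\<dots> = (1 - m^2/K^2) * (norm z)\<^sup>2"
    proof -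
      have e1: "\<alpha> * K^2 = m" unfolding \<alpha>_def using K by simp
      have e2: "\<alpha> * m = m^2/K^2" unfolding \<alpha>_def by (simp add: power2_eq_square)
      have "\<alpha>^2 * (norm z * K)\<^sup>2 = \<alpha> * (\<alpha> * K^2) * (norm z)\<^sup>2" by (simp add: power2_eq_square algebra_simps)
      also have "\<dots> = (\<alpha> * m) * (norm z)\<^sup>2" using e1 by simp
      finally have "\<alpha>^2 * (norm z * K)\<^sup>2 = (m^2/K^2) * (norm z)\<^sup>2" using e2 by simp
      moreover have "2 * \<alpha> * (m * (norm z)\<^sup>2) = 2 * (\<alpha> * m) * (norm z)\<^sup>2" by (simp add: mult_ac)
      then have "2 * \<alpha> * (m * (norm z)\<^sup>2) = 2 * (m^2/K^2) * (norm z)\<^sup>2" using e2 by simp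
      ultimately show ?thesis by (simp add: algebra_simps)
    qed
    also have "\<dots> \<le> c^2 * (norm z)\<^sup>2" unfolding c_def by (simp add: mult_right_mono)
    also have "\<dots> = (c * norm z)\<^sup>2" by (simp add: power_mult_distrib)
    finally show ?thesis by (rule power2_le_imp_le) (use c0 in simp)
  qed
  show ?thesis
  proof (rule surjI[where f = "\<lambda>v. THE x. x - \<alpha> *\<^sub>R (S x - v) = x"])
    fix v
    define f where "f x = x - \<alpha> *\<^sub>R (S x - v)" for x
    have "\<forall>x y. dist (f x) (f y) \<le> c * dist x y"
    proof (intro allI)
      fix x y
      have "f x - f y = (x - y) - \<alpha> *\<^sub>R S (x - y)" unfolding f_def by (simp add: bl.diff algebra_simps)
      then show "dist (f x) (f y) \<le> c * dist x y" using contr[of "x - y"] by (simp add: dist_norm)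
    qed
    from banach_fix_type[OF c0 c1 this] have ex: "\<exists>!x. f x = x" .
    then have "f (THE x. f x = x) = (THE x. f x = x)" by (rule theI')
    moreover have "\<alpha> \<noteq> 0" unfolding \<alpha>_def using m K by simp
    ultimately have "S (THE x. f x = x) = v" unfolding f_def by simp
    then show "S (THE x. x - \<alpha> *\<^sub>R (S x - v) = x) = v" unfolding f_def by simp
  qed
qed

lemma spo_inj:
  fixes S :: "'a::{real_inner,complete_space} \<Rightarrow> 'a"
  assumes "strongly_pos_op S"
  shows "inj S"
proof -
  note F = spo_facts[OF assms]
  interpret bl: bounded_linear S by (rule F(1))
  obtain m where m: "m > 0" "\<And>x. inner (S x) x \<ge> m * (norm x)\<^sup>2" using F(3) by auto
  show ?thesis
  proof (rule injI)
    fix x y assume "S x = S y"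
    then have "S (x - y) = 0" by (simp add: bl.diff)
    then have "m * (norm (x - y))\<^sup>2 \<le> 0" using m(2)[of "x - y"] by simp
    then show "x = y" using m(1) by (simp add: mult_le_0_iff)
  qed
qed

lemma spo_bij:
  fixes S :: "'a::{real_inner,complete_space} \<Rightarrow> 'a"
  assumes "strongly_pos_op S" shows "bij S"
  using spo_inj[OF assms] spo_surj[OF assms] by (simp add: bij_def)

lemma spo_SinvS:
  fixes S :: "'a::{real_inner,complete_space} \<Rightarrow> 'a"
  assumes "strongly_pos_op S" shows "S (op_inv S v) = v"
  unfolding op_inv_def using spo_surj[OF assms] by (simp add: surj_f_inv_f)

lemma spo_invSS:
  fixes S :: "'a::{real_inner,complete_space} \<Rightarrow> 'a"
  assumes "strongly_pos_op S" shows "op_inv S (S v) = v"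
  unfolding op_inv_def using spo_inj[OF assms] by (simp add: inv_f_f)

lemma spo_lin:
  fixes S :: "'a::{real_inner,complete_space} \<Rightarrow> 'a"
  assumes "strongly_pos_op S"
  shows "S (a - b) = S a - S b" "S (a + b) = S a + S b" "S (c *\<^sub>R a) = c *\<^sub>R S a" "S (- a) = - S a"
proof -
  interpret bl: bounded_linear S by (rule spo_facts(1)[OF assms])
  show "S (a - b) = S a - S b" "S (a + b) = S a + S b" "S (c *\<^sub>R a) = c *\<^sub>R S a" "S (- a) = - S a"
    by (simp_all add: bl.diff bl.add bl.scaleR bl.neg)
qed

lemma spo_sym:
  fixes S :: "'a::{real_inner,complete_space} \<Rightarrow> 'a"
  assumes "strongly_pos_op S" shows "inner (S a) b = inner (S b) a"
  using spo_facts(2)[OF assms, of a b] by (simp add: inner_commute)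

lemma spo_inv_diff:
  fixes S :: "'a::{real_inner,complete_space} \<Rightarrow> 'a"
  assumes "strongly_pos_op S" shows "op_inv S (a - b) = op_inv S a - op_inv S b"
proof -
  have "S (op_inv S a - op_inv S b) = a - b" using spo_lin[OF assms] spo_SinvS[OF assms] by simp
  then have "op_inv S (S (op_inv S a - op_inv S b)) = op_inv S (a - b)" by simp
  then show ?thesis using spo_invSS[OF assms] by simp
qed

lemma spo_q_nonneg:
  fixes S :: "'a::{real_inner,complete_space} \<Rightarrow> 'a"
  assumes "strongly_pos_op S" shows "0 \<le> inner (S x) x"
proof -
  obtain m where m: "m > 0" "\<And>x. inner (S x) x \<ge> m * (norm x)\<^sup>2" using spo_facts(3)[OF assms] by auto
  have "0 \<le> m * (norm x)\<^sup>2" using m(1) by simp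
  then show ?thesis using m(2)[of x] by linarith
qed

lemma spo_q0:
  fixes S :: "'a::{real_inner,complete_space} \<Rightarrow> 'a"
  assumes "strongly_pos_op S" "inner (S x) x = 0" shows "x = 0"
proof -
  obtain m where m: "m > 0" "\<And>x. inner (S x) x \<ge> m * (norm x)\<^sup>2" using spo_facts(3)[OF assms(1)] by auto
  have "m * (norm x)\<^sup>2 \<le> 0" using m(2)[of x] assms(2) by simp
  then show ?thesis using m(1) by (simp add: mult_le_0_iff)
qed

lemma normS_nonneg:
  fixes S :: "'a::{real_inner,complete_space} \<Rightarrow> 'a"
  assumes "strongly_pos_op S" shows "0 \<le> norm_S S x"
  unfolding norm_S_def using spo_q_nonneg[OF assms, of x] by simp

lemma spo_sq:
  fixes S :: "'a::{real_inner,complete_space} \<Rightarrow> 'a"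
  assumes "strongly_pos_op S" shows "(norm_S S x)\<^sup>2 = inner (S x) x"
  unfolding norm_S_def using spo_q_nonneg[OF assms, of x] by simp

lemma spo_bil:
  fixes S :: "'a::{real_inner,complete_space} \<Rightarrow> 'a"
  assumes "strongly_pos_op S"
  shows "inner (S (a + b)) c = inner (S a) c + inner (S b) c"
    "inner (S (a - b)) c = inner (S a) c - inner (S b) c"
    "inner (S c) (a + b) = inner (S c) a + inner (S c) b"
    "inner (S c) (a - b) = inner (S c) a - inner (S c) b"
    "inner (S (r *\<^sub>R a)) c = r * inner (S a) c"
    "inner (S c) (r *\<^sub>R a) = r * inner (S c) a"
  by (simp_all add: spo_lin[OF assms] inner_add_left inner_diff_left inner_add_right inner_diff_right)

lemma spo_q_add:
  fixes S :: "'a::{real_inner,complete_space} \<Rightarrow> 'a"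
  assumes "strongly_pos_op S"
  shows "(norm_S S (a + b))\<^sup>2 = (norm_S S a)\<^sup>2 + 2 * inner (S a) b + (norm_S S b)\<^sup>2"
proof -
  have "inner (S b) a = inner (S a) b" using spo_sym[OF assms] by simp
  then show ?thesis unfolding spo_sq[OF assms] spo_bil[OF assms] by simp
qed

lemma spo_q_diff:
  fixes S :: "'a::{real_inner,complete_space} \<Rightarrow> 'a"
  assumes "strongly_pos_op S"
  shows "(norm_S S (a - b))\<^sup>2 = (norm_S S a)\<^sup>2 - 2 * inner (S a) b + (norm_S S b)\<^sup>2"
proof -
  have "inner (S b) a = inner (S a) b" using spo_sym[OF assms] by simp
  then show ?thesis unfolding spo_sq[OF assms] spo_bil[OF assms] by simp
qed

lemma spo_three0:
  fixes S :: "'a::{real_inner,complete_space} \<Rightarrow> 'a"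
  assumes "strongly_pos_op S"
  shows "2 * inner (S (p - r)) s = (norm_S S p)\<^sup>2 - (norm_S S r)\<^sup>2
           + (norm_S S (s - r))\<^sup>2 - (norm_S S (s - p))\<^sup>2"
proof -
  have s: "inner (S p) s = inner (S s) p" "inner (S r) s = inner (S s) r" using spo_sym[OF assms] by simp_all
  show ?thesis unfolding spo_q_diff[OF assms] spo_bil(2)[OF assms] using s by simp
qed

lemma spo_three:
  fixes S :: "'a::{real_inner,complete_space} \<Rightarrow> 'a"
  assumes "strongly_pos_op S"
  shows "2 * inner (S (a - b)) (c - z) = (norm_S S (a - z))\<^sup>2 - (norm_S S (b - z))\<^sup>2
           + (norm_S S (c - b))\<^sup>2 - (norm_S S (c - a))\<^sup>2"
proof -
  have 1: "c - b = (c - z) - (b - z)" "c - a = (c - z) - (a - z)" "a - b = (a - z) - (b - z)" by simp_all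
  show ?thesis using spo_three0[OF assms, of "a - z" "b - z" "c - z"] unfolding 1[symmetric] .
qed

lemma normS_scale:
  fixes S :: "'a::{real_inner,complete_space} \<Rightarrow> 'a"
  assumes "strongly_pos_op S" shows "norm_S S (r *\<^sub>R a) = \<bar>r\<bar> * norm_S S a"
proof -
  have "inner (S (r *\<^sub>R a)) (r *\<^sub>R a) = r^2 * inner (S a) a"
    using spo_bil[OF assms] by (simp add: power2_eq_square)
  then show ?thesis unfolding norm_S_def by (simp add: real_sqrt_mult)
qed

lemma normS_minus:
  fixes S :: "'a::{real_inner,complete_space} \<Rightarrow> 'a"
  assumes "strongly_pos_op S" shows "norm_S S (- a) = norm_S S a"
  using normS_scale[OF assms, of "-1" a] by simp

lemma amgm: fixes a b c :: real assumes "c > 0" shows "2 * a * b \<le> c * a^2 + b^2 / c"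
proof -
  have "0 \<le> (c * a - b)^2 / c" using assms by simp
  also have "\<dots> = c * a^2 - 2 * a * b + b^2 / c" using assms
    by (simp add: power2_eq_square field_simps)
  finally show ?thesis by simp
qed

lemma spo_cs:
  fixes S :: "'a::{real_inner,complete_space} \<Rightarrow> 'a"
  assumes "strongly_pos_op S" shows "inner (S a) b \<le> norm_S S a * norm_S S b"
proof (cases "norm_S S a = 0 \<or> norm_S S b = 0")
  case True
  then show ?thesis
  proof
    assume "norm_S S a = 0"
    then have "a = 0" using spo_q0[OF assms] spo_sq[OF assms, of a] by simp
    then show ?thesis using spo_lin(3)[OF assms, of 0 a] by (simp add: normS_nonneg[OF assms])
  next
    assume "norm_S S b = 0"
    then have "b = 0" using spo_q0[OF assms] spo_sq[OF assms, of b] by simp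
    then show ?thesis by (simp add: normS_nonneg[OF assms])
  qed
next
  case False
  define na nb where "na = norm_S S a" "nb = norm_S S b"
  have pos: "na > 0" "nb > 0" using False normS_nonneg[OF assms, of a] normS_nonneg[OF assms, of b] unfolding na_nb_def by auto
  define c where "c = nb / na"
  have c: "c > 0" unfolding c_def using pos by simp
  have "0 \<le> (norm_S S (c *\<^sub>R a - b))\<^sup>2" by simp
  also have "\<dots> = c^2 * na^2 - 2 * c * inner (S a) b + nb^2"
    unfolding spo_q_diff[OF assms] normS_scale[OF assms] spo_bil[OF assms] na_nb_def using c
    by (simp add: power_mult_distrib)
  finally have "2 * c * inner (S a) b \<le> c^2 * na^2 + nb^2" by simp
  also have "c^2 * na^2 = nb^2" unfolding c_def using pos by (simp add: power_divide)
  finally have "2 * c * inner (S a) b \<le> 2 * (c * (na * nb))" unfolding c_def using pos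
    by (simp add: power2_eq_square)
  then have "inner (S a) b \<le> na * nb" using c by simp
  then show ?thesis unfolding na_nb_def .
qed

lemma spo_cs_abs:
  fixes S :: "'a::{real_inner,complete_space} \<Rightarrow> 'a"
  assumes "strongly_pos_op S" shows "\<bar>inner (S a) b\<bar> \<le> norm_S S a * norm_S S b"
proof -
  have "- inner (S a) b = inner (S (- a)) b" using spo_lin(4)[OF assms] by simp
  also have "\<dots> \<le> norm_S S a * norm_S S b" using spo_cs[OF assms, of "- a" b] normS_minus[OF assms] by simp
  finally show ?thesis using spo_cs[OF assms, of a b] by linarith
qed

lemma spo_dn:
  fixes S :: "'a::{real_inner,complete_space} \<Rightarrow> 'a"
  assumes "strongly_pos_op S" shows "norm_S (op_inv S) v = norm_S S (op_inv S v)"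
proof -
  have "inner (op_inv S v) v = inner (S (op_inv S v)) (op_inv S v)"
    using spo_SinvS[OF assms, of v] by (metis inner_commute)
  then show ?thesis unfolding norm_S_def by simp
qed

lemma spo_dual_abs:
  fixes S :: "'a::{real_inner,complete_space} \<Rightarrow> 'a"
  assumes "strongly_pos_op S" shows "\<bar>inner v z\<bar> \<le> norm_S (op_inv S) v * norm_S S z"
  using spo_cs_abs[OF assms, of "op_inv S v" z] unfolding spo_SinvS[OF assms] spo_dn[OF assms] .



lemma descent_step:
  fixes S :: "'a::{real_inner,complete_space} \<Rightarrow> 'a"
    and A :: "'a \<Rightarrow> 'a set" and B C :: "'a \<Rightarrow> 'a"
    and \<mu> \<beta> \<rho> \<epsilon>1 \<epsilon>2 t G Lk Lp :: real
    and xs as xk yk x1 uk u1 ak x' y' :: 'a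
  assumes S: "strongly_pos_op S"
    and Bm: "monotone_single B" and Bl: "lipschitz_wrt S \<mu> B" and mu: "\<mu> \<ge> 0"
    and C: "cocoercive_wrt S \<beta> C" "\<beta> > 0"
    and G: "G > 0" and Lkp: "0 \<le> Lk" "0 \<le> Lp"
    and Astr: "\<rho> > 0" "strongly_monotone_wrt S \<rho> A"
    and eps: "\<epsilon>1 > 0" "\<epsilon>2 > 0" "t > 0"
    and c1: "G < 1 / \<epsilon>1"
    and c2: "t * (1 + Lk / \<epsilon>2) \<le> 2 * G * \<rho> * (1 - G * \<epsilon>1)"
    and c3: "t * Lk * (\<epsilon>2 + 1) \<le>
              (1 - Lp - Lk - 2 * G * Lk * \<mu> - G\<^sup>2 * \<mu>\<^sup>2 - G * \<beta> / 2)
              + 2 * G\<^sup>2 * \<rho> * \<mu>\<^sup>2 * (G - 1 / \<epsilon>1)"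
    and as: "as \<in> A xs" "as + B xs + C xs = 0"
    and ak: "ak \<in> A yk"
    and Gak: "G *\<^sub>R ak = S (xk - x1) + (uk - u1) - G *\<^sub>R (B yk + C xk)"
    and x1: "x1 = yk - G *\<^sub>R op_inv S (B yk) + G *\<^sub>R op_inv S (B xk)"
    and u1b: "norm_S (op_inv S) u1 \<le> Lk * norm_S S (yk - xk)"
    and ukb: "norm_S (op_inv S) uk \<le> Lp * norm_S S (y' - x')"
  shows "(1 + t) * ((norm_S S (x1 - xs))\<^sup>2 + 2 * inner u1 (x1 - xs) + Lk * (norm_S S (yk - xk))\<^sup>2)
     \<le> (norm_S S (xk - xs))\<^sup>2 + 2 * inner uk (xk - xs) + Lp * (norm_S S (y' - x'))\<^sup>2"
proof -
  define E0 E1 D D' Y W where "E0 = norm_S S (xk - xs)" "E1 = norm_S S (x1 - xs)"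
    "D = norm_S S (yk - xk)" "D' = norm_S S (y' - x')" "Y = norm_S S (yk - xs)" "W = norm_S S (yk - x1)"
  note nn = normS_nonneg[OF S]
  have pos: "E0 \<ge> 0" "E1 \<ge> 0" "D \<ge> 0" "D' \<ge> 0" "Y \<ge> 0" "W \<ge> 0"
    unfolding E0_E1_D_D'_Y_W_def by (simp_all add: nn)
  define U0 U1 Ud Uw X where "U0 = inner uk (xk - xs)" "U1 = inner u1 (x1 - xs)"
    "Ud = inner uk (yk - xk)" "Uw = inner u1 (yk - x1)" "X = inner (S (xk - x1)) (yk - xs)"
  define Uterm where "Uterm = inner (uk - u1) (yk - xs)"
  have asv: "as = - (B xs + C xs)" using as(2) by (simp add: algebra_simps eq_neg_iff_add_eq_0)
  have mono: "\<rho> * Y\<^sup>2 \<le> inner (ak - as) (yk - xs)"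
    using Astr(2) ak as(1) unfolding strongly_monotone_wrt_def gra_def E0_E1_D_D'_Y_W_def by fastforce
  have vec: "G *\<^sub>R (ak - as) = S (xk - x1) + (uk - u1) - G *\<^sub>R (B yk - B xs) - G *\<^sub>R (C xk - C xs)"
  proof -
    have "G *\<^sub>R (ak - as) = G *\<^sub>R ak + G *\<^sub>R (B xs + C xs)" unfolding asv by (simp add: algebra_simps)
    also have "\<dots> = S (xk - x1) + (uk - u1) - G *\<^sub>R (B yk - B xs) - G *\<^sub>R (C xk - C xs)"
      unfolding Gak by (simp add: algebra_simps)
    finally show ?thesis .
  qed
  have split1: "G * inner (ak - as) (yk - xs) = X + Uterm - G * inner (B yk - B xs) (yk - xs) - G * inner (C xk - C xs) (yk - xs)"
  proof -
    have "G * inner (ak - as) (yk - xs) = inner (G *\<^sub>R (ak - as)) (yk - xs)" by simp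
    also have "\<dots> = X + Uterm - G * inner (B yk - B xs) (yk - xs) - G * inner (C xk - C xs) (yk - xs)"
      unfolding vec U0_U1_Ud_Uw_X_def(5) Uterm_def by (simp only: inner_diff_left inner_add_left inner_scaleR_left)
    finally show ?thesis .
  qed
  have Bpos: "inner (B yk - B xs) (yk - xs) \<ge> 0" using Bm unfolding monotone_single_def by simp
  define w where "w = norm_S (op_inv S) (C xk - C xs)"
  have w0: "w \<ge> 0" unfolding w_def spo_dn[OF S] by (simp add: nn)
  have coco: "inner (C xk - C xs) (xk - xs) \<ge> (1 / \<beta>) * w\<^sup>2" using C(1) unfolding cocoercive_wrt_def w_def by simp
  have cd: "\<bar>inner (C xk - C xs) (yk - xk)\<bar> \<le> w * D" unfolding w_def E0_E1_D_D'_Y_W_def by (rule spo_dual_abs[OF S])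
  have "2 * w * D \<le> (2 / \<beta>) * w\<^sup>2 + D\<^sup>2 / (2 / \<beta>)" by (rule amgm) (use C(2) in simp)
  then have am1: "w * D \<le> (1 / \<beta>) * w\<^sup>2 + (\<beta> / 4) * D\<^sup>2" by (simp add: field_simps)
  have "inner (C xk - C xs) (yk - xs) = inner (C xk - C xs) (xk - xs) + inner (C xk - C xs) (yk - xk)"
    by (simp add: inner_diff_right)
  then have Cterm: "inner (C xk - C xs) (yk - xs) \<ge> - (\<beta> / 4) * D\<^sup>2" using coco cd am1 by linarith
  have F1: "G * \<rho> * Y\<^sup>2 \<le> X + Uterm + G * (\<beta> / 4) * D\<^sup>2"
  proof -
    have "G * (\<rho> * Y\<^sup>2) \<le> G * inner (ak - as) (yk - xs)" using mono G by simp
    moreover have "G * inner (B yk - B xs) (yk - xs) \<ge> 0" using G Bpos by simp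
    moreover have "G * inner (C xk - C xs) (yk - xs) \<ge> G * (- (\<beta> / 4) * D\<^sup>2)" by (rule mult_left_mono[OF Cterm]) (use G in simp)
    ultimately show ?thesis using split1 by (simp add: algebra_simps)
  qed
  have F2: "2 * X = E0\<^sup>2 - E1\<^sup>2 + W\<^sup>2 - D\<^sup>2" unfolding U0_U1_Ud_Uw_X_def E0_E1_D_D'_Y_W_def by (rule spo_three[OF S])
  have yx1: "yk - x1 = G *\<^sub>R op_inv S (B yk - B xk)" unfolding x1 spo_inv_diff[OF S] by (simp add: algebra_simps)
  have Wb: "W \<le> G * \<mu> * D"
  proof -
    have "W = G * norm_S (op_inv S) (B yk - B xk)" unfolding E0_E1_D_D'_Y_W_def yx1 normS_scale[OF S] spo_dn[OF S] using G by simp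
    also have "\<dots> \<le> G * (\<mu> * D)" using Bl G unfolding lipschitz_wrt_def E0_E1_D_D'_Y_W_def by (simp add: mult_left_mono)
    finally show ?thesis by simp
  qed
  have W2: "W\<^sup>2 \<le> G\<^sup>2 * \<mu>\<^sup>2 * D\<^sup>2" using power_mono[OF Wb pos(6)] by (simp add: power_mult_distrib)
  have F3: "Uterm = U0 + Ud - U1 - Uw"
  proof -
    have "inner uk (yk - xs) = inner uk (xk - xs) + inner uk (yk - xk)" by (simp add: inner_diff_right)
    moreover have "inner u1 (yk - xs) = inner u1 (x1 - xs) + inner u1 (yk - x1)" by (simp add: inner_diff_right)
    ultimately show ?thesis unfolding Uterm_def U0_U1_Ud_Uw_X_def inner_diff_left by simp
  qed
  have F4: "2 * Ud \<le> Lp * (D'\<^sup>2 + D\<^sup>2)"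
  proof -
    have "Ud \<le> norm_S (op_inv S) uk * D" unfolding U0_U1_Ud_Uw_X_def E0_E1_D_D'_Y_W_def using spo_dual_abs[OF S] abs_le_D1 by blast
    also have "\<dots> \<le> (Lp * D') * D" using ukb pos unfolding E0_E1_D_D'_Y_W_def by (simp add: mult_right_mono)
    finally have "2 * Ud \<le> Lp * (2 * D' * D)" by simp
    also have "\<dots> \<le> Lp * (D'\<^sup>2 + D\<^sup>2)" using amgm[of 1 D' D] Lkp by (simp add: mult_left_mono)
    finally show ?thesis .
  qed
  have F5: "- Uw \<le> Lk * G * \<mu> * D\<^sup>2"
  proof -
    have "- Uw \<le> norm_S (op_inv S) u1 * W" unfolding U0_U1_Ud_Uw_X_def E0_E1_D_D'_Y_W_def using spo_dual_abs[OF S] abs_le_D2 by blast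
    also have "\<dots> \<le> (Lk * D) * W" using u1b pos unfolding E0_E1_D_D'_Y_W_def by (simp add: mult_right_mono)
    also have "\<dots> \<le> (Lk * D) * (G * \<mu> * D)" using Wb pos Lkp by (simp add: mult_left_mono)
    finally show ?thesis by (simp add: power2_eq_square algebra_simps)
  qed
  define \<delta> where "\<delta> = G * \<epsilon>1"
  have d0: "\<delta> > 0" "\<delta> < 1" unfolding \<delta>_def using G eps c1 by (auto simp: field_simps)
  have F6: "Y\<^sup>2 \<ge> (1 - \<delta>) * E1\<^sup>2 + (1 - 1 / \<delta>) * (G\<^sup>2 * \<mu>\<^sup>2 * D\<^sup>2)"
  proof -
    have "yk - xs = (x1 - xs) + (yk - x1)" by simp
    then have "Y\<^sup>2 = E1\<^sup>2 + 2 * inner (S (x1 - xs)) (yk - x1) + W\<^sup>2"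
      unfolding E0_E1_D_D'_Y_W_def by (metis spo_q_add[OF S])
    moreover have "\<bar>inner (S (x1 - xs)) (yk - x1)\<bar> \<le> E1 * W" unfolding E0_E1_D_D'_Y_W_def by (rule spo_cs_abs[OF S])
    moreover have "2 * E1 * W \<le> \<delta> * E1\<^sup>2 + W\<^sup>2 / \<delta>" by (rule amgm) (use d0 in simp)
    ultimately have "Y\<^sup>2 \<ge> (1 - \<delta>) * E1\<^sup>2 + (1 - 1 / \<delta>) * W\<^sup>2" by (simp add: algebra_simps)
    moreover have "(1 - 1 / \<delta>) * W\<^sup>2 \<ge> (1 - 1 / \<delta>) * (G\<^sup>2 * \<mu>\<^sup>2 * D\<^sup>2)"
    proof -
      have "1 - 1 / \<delta> \<le> 0" using d0 by (simp add: field_simps)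
      then show ?thesis using W2 by (simp add: mult_left_mono_neg)
    qed
    ultimately show ?thesis by linarith
  qed
  have F7: "\<bar>U1\<bar> \<le> Lk * D * E1"
  proof -
    have "\<bar>U1\<bar> \<le> norm_S (op_inv S) u1 * E1" unfolding U0_U1_Ud_Uw_X_def E0_E1_D_D'_Y_W_def by (rule spo_dual_abs[OF S])
    also have "\<dots> \<le> (Lk * D) * E1" using u1b pos unfolding E0_E1_D_D'_Y_W_def by (simp add: mult_right_mono)
    finally show ?thesis .
  qed
  have F7b: "2 * U1 \<le> Lk * (\<epsilon>2 * D\<^sup>2 + E1\<^sup>2 / \<epsilon>2)"
  proof -
    have "2 * U1 \<le> Lk * (2 * D * E1)" using F7 by simp
    also have "\<dots> \<le> Lk * (\<epsilon>2 * D\<^sup>2 + E1\<^sup>2 / \<epsilon>2)" using amgm[of \<epsilon>2 D E1] eps Lkp by (simp add: mult_left_mono)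
    finally show ?thesis .
  qed
  define \<kappa> where "\<kappa> = 1 - Lp - Lk - 2 * G * Lk * \<mu> - G\<^sup>2 * \<mu>\<^sup>2 - G * \<beta> / 2"
  define \<nu> where "\<nu> = 2 * G\<^sup>2 * \<rho> * \<mu>\<^sup>2 * (G - 1 / \<epsilon>1)"
  have P1: "E0\<^sup>2 + 2 * U0 + Lp * D'\<^sup>2 \<ge> E1\<^sup>2 + 2 * U1 + Lk * D\<^sup>2 + \<kappa> * D\<^sup>2 + 2 * G * \<rho> * Y\<^sup>2"
    using F1 F2 F3 F4 F5 W2 unfolding \<kappa>_def by (simp add: algebra_simps)
  have P2: "2 * G * \<rho> * Y\<^sup>2 \<ge> 2 * G * \<rho> * (1 - G * \<epsilon>1) * E1\<^sup>2 + \<nu> * D\<^sup>2"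
  proof -
    have "2 * G * \<rho> * Y\<^sup>2 \<ge> 2 * G * \<rho> * ((1 - \<delta>) * E1\<^sup>2 + (1 - 1 / \<delta>) * (G\<^sup>2 * \<mu>\<^sup>2 * D\<^sup>2))"
      using F6 G Astr(1) by (simp add: mult_left_mono)
    also have "2 * G * \<rho> * ((1 - \<delta>) * E1\<^sup>2 + (1 - 1 / \<delta>) * (G\<^sup>2 * \<mu>\<^sup>2 * D\<^sup>2)) = 2 * G * \<rho> * (1 - G * \<epsilon>1) * E1\<^sup>2 + \<nu> * D\<^sup>2"
      unfolding \<nu>_def \<delta>_def using G eps by (simp add: field_simps power2_eq_square)
    finally show ?thesis .
  qed
  have P3: "(\<kappa> + \<nu>) * D\<^sup>2 \<ge> t * Lk * (\<epsilon>2 + 1) * D\<^sup>2" using c3 unfolding \<kappa>_def \<nu>_def by (simp add: mult_right_mono)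
  have P4: "2 * G * \<rho> * (1 - G * \<epsilon>1) * E1\<^sup>2 \<ge> t * (1 + Lk / \<epsilon>2) * E1\<^sup>2" using c2 by (simp add: mult_right_mono)
  have P5: "t * (2 * U1) \<le> t * (Lk * (\<epsilon>2 * D\<^sup>2 + E1\<^sup>2 / \<epsilon>2))" using F7b eps by (simp add: mult_left_mono)
  have P6: "t * (E1\<^sup>2 + 2 * U1 + Lk * D\<^sup>2) \<le> t * (1 + Lk / \<epsilon>2) * E1\<^sup>2 + t * Lk * (\<epsilon>2 + 1) * D\<^sup>2"
    using P5 by (simp add: algebra_simps)
  have "(1 + t) * (E1\<^sup>2 + 2 * U1 + Lk * D\<^sup>2) \<le> E0\<^sup>2 + 2 * U0 + Lp * D'\<^sup>2"
    using P1 P2 P3 P4 P6 by (simp add: algebra_simps)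
  then show ?thesis unfolding E0_E1_D_D'_Y_W_def U0_U1_Ud_Uw_X_def .
qed



lemma aux1: "(m::real) / a ^ k / b = m / b * (1 / a) ^ k"
  by (simp add: power_one_over)
lemma aux2: "(K::real) \<ge> 0 \<Longrightarrow> K * (q\<^sup>2) ^ k = (sqrt K * q ^ k)\<^sup>2"
  by (simp add: power_mult_distrib power_mult[symmetric] mult.commute[of 2 k])
lemma aux3: "(N::real) \<ge> 0 \<Longrightarrow> K \<ge> 0 \<Longrightarrow> q > 0 \<Longrightarrow> N\<^sup>2 \<le> (sqrt K * q ^ k)\<^sup>2 \<Longrightarrow> N \<le> sqrt K * q ^ k"
  by (rule power2_le_imp_le) simp_all

theorem theorem3p2:
  fixes S :: "'a::{real_inner,complete_space} \<Rightarrow> 'a"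
    and A :: "'a \<Rightarrow> 'a set" and B C :: "'a \<Rightarrow> 'a"
    and \<mu> \<beta> \<gamma>0 \<rho> \<epsilon>1 \<epsilon>2 t :: real
    and \<gamma> L :: "nat \<Rightarrow> real" and M :: "nat \<Rightarrow> 'a \<Rightarrow> 'a"
    and xs x0 u0 :: 'a and x y u :: "nat \<Rightarrow> 'a"
  assumes S: "strongly_pos_op S"
    and A: "maximally_monotone A"
    and B: "monotone_single B" "\<mu> \<ge> 0" "lipschitz_wrt S \<mu> B"
    and C: "cocoercive_wrt S \<beta> C" "\<beta> > 0"
    and zer_ne: "zer3 A B C \<noteq> {}"
    and gam: "\<gamma>0 > 0" "\<And>k. \<gamma> k \<ge> \<gamma>0"
    and Lk: "\<And>k. 0 \<le> L k \<and> L k < 1"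
    and M: "\<And>k. lipschitz_wrt S (L k) (\<lambda>z. \<gamma> k *\<^sub>R M k z - S z)"
    and Astr: "\<rho> > 0" "strongly_monotone_wrt S \<rho> A"
    and Lbar: "(SUP k. L k) < 1"
    and eps: "\<epsilon>1 > 0" "\<epsilon>2 > 0" "t > 0"
    and c1: "\<And>k. k \<ge> 1 \<Longrightarrow> \<gamma> k < 1 / \<epsilon>1"
    and c2: "\<And>k. k \<ge> 1 \<Longrightarrow> t * (1 + L k / \<epsilon>2) \<le> 2 * \<gamma> k * \<rho> * (1 - \<gamma> k * \<epsilon>1)"
    and c3: "\<And>k. k \<ge> 1 \<Longrightarrow> t * L k * (\<epsilon>2 + 1) \<le>
              (1 - L (k - 1) - L k - 2 * \<gamma> k * L k * \<mu> - (\<gamma> k)\<^sup>2 * \<mu>\<^sup>2 - \<gamma> k * \<beta> / 2)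
              + 2 * (\<gamma> k)\<^sup>2 * \<rho> * \<mu>\<^sup>2 * (\<gamma> k - 1 / \<epsilon>1)"
    and xs: "xs \<in> zer3 A B C"
    and alg: "NFBHF_M S A B C \<gamma> M x0 u0 x y u"
  shows "(\<forall>k\<ge>1. (1 - L k) * (norm_S S (x (Suc k) - xs))\<^sup>2 \<le>
            ((norm_S S (x 1 - xs))\<^sup>2 + 2 * inner (u 1) (x 1 - xs) + L 0 * (norm_S S (y 0 - x 0))\<^sup>2)
            / (1 + t) ^ k)
       \<and> (\<exists>c q. 0 \<le> c \<and> 0 < q \<and> q < 1 \<and> (\<forall>k. norm_S S (x k - xs) \<le> c * q ^ k))"
proof -
  have algk: "(M k (x k) - (B (x k) + C (x k)) + (1 / \<gamma> k) *\<^sub>R u k) - M k (y k) \<in> A (y k)"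
    "x (Suc k) = y k - \<gamma> k *\<^sub>R op_inv S (B (y k)) + \<gamma> k *\<^sub>R op_inv S (B (x k))"
    "u (Suc k) = (\<gamma> k *\<^sub>R M k (y k) - S (y k)) - (\<gamma> k *\<^sub>R M k (x k) - S (x k))" for k
    using alg unfolding NFBHF_M_def by blast+
  obtain as where as: "as \<in> A xs" "as + B xs + C xs = 0" using xs unfolding zer3_def by auto
  have G0: "\<gamma> k > 0" for k using gam(1) gam(2)[of k] by linarith
  have ub: "norm_S (op_inv S) (u (Suc k)) \<le> L k * norm_S S (y k - x k)" for k
    using M[of k] unfolding lipschitz_wrt_def algk(3)[of k] by simp
  define Phi where "Phi k = (norm_S S (x k - xs))\<^sup>2 + 2 * inner (u k) (x k - xs)
      + L (k - 1) * (norm_S S (y (k - 1) - x (k - 1)))\<^sup>2" for k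
  have desc: "(1 + t) * Phi (Suc k) \<le> Phi k" if k1: "k \<ge> 1" for k
  proof -
    obtain j where kj: "k = Suc j" using k1 by (cases k) auto
    define ak where "ak = (M k (x k) - (B (x k) + C (x k)) + (1 / \<gamma> k) *\<^sub>R u k) - M k (y k)"
    have ak: "ak \<in> A (y k)" unfolding ak_def by (rule algk(1))
    have Sx1: "S (x (Suc k)) = S (y k) - \<gamma> k *\<^sub>R B (y k) + \<gamma> k *\<^sub>R B (x k)"
      unfolding algk(2) spo_lin[OF S] spo_SinvS[OF S] by simp
    have Gak: "\<gamma> k *\<^sub>R ak = S (x k - x (Suc k)) + (u k - u (Suc k)) - \<gamma> k *\<^sub>R (B (y k) + C (x k))"
    proof -
      have "\<gamma> k *\<^sub>R ak = \<gamma> k *\<^sub>R M k (x k) - \<gamma> k *\<^sub>R (B (x k) + C (x k)) + u k - \<gamma> k *\<^sub>R M k (y k)"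
        unfolding ak_def using G0[of k] by (simp add: algebra_simps)
      then show ?thesis unfolding spo_lin(1)[OF S] Sx1 algk(3) by (simp add: algebra_simps)
    qed
    have "(1 + t) * ((norm_S S (x (Suc k) - xs))\<^sup>2 + 2 * inner (u (Suc k)) (x (Suc k) - xs) + L k * (norm_S S (y k - x k))\<^sup>2)
     \<le> (norm_S S (x k - xs))\<^sup>2 + 2 * inner (u k) (x k - xs) + L j * (norm_S S (y j - x j))\<^sup>2"
      apply (rule descent_step[OF S B(1) B(3) B(2) C(1) C(2) G0[of k] conjunct1[OF Lk[of k]] conjunct1[OF Lk[of j]]
            Astr(1) Astr(2) eps(1) eps(2) eps(3) c1[OF k1] c2[OF k1] _ as(1) as(2) ak Gak algk(2) ub])
      using c3[OF k1] kj ub[of j] by simp_all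
    then show ?thesis unfolding Phi_def using kj by simp
  qed
  have lower: "(1 - L k) * (norm_S S (x (Suc k) - xs))\<^sup>2 \<le> Phi (Suc k)" for k
  proof -
    define E D where "E = norm_S S (x (Suc k) - xs)" "D = norm_S S (y k - x k)"
    have pos: "E \<ge> 0" "D \<ge> 0" unfolding E_D_def by (simp_all add: normS_nonneg[OF S])
    have "\<bar>inner (u (Suc k)) (x (Suc k) - xs)\<bar> \<le> norm_S (op_inv S) (u (Suc k)) * E"
      unfolding E_D_def by (rule spo_dual_abs[OF S])
    also have "\<dots> \<le> (L k * D) * E" using ub[of k] pos unfolding E_D_def by (simp add: mult_right_mono)
    finally have i1: "\<bar>inner (u (Suc k)) (x (Suc k) - xs)\<bar> \<le> L k * D * E" .
    have "L k * (2 * D * E) \<le> L k * (D\<^sup>2 + E\<^sup>2)" using amgm[of 1 D E] Lk[of k] by (simp add: mult_left_mono)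
    then have "2 * inner (u (Suc k)) (x (Suc k) - xs) \<ge> - (L k * (D\<^sup>2 + E\<^sup>2))" using i1 by (simp add: algebra_simps)
    then show ?thesis unfolding Phi_def E_D_def by (simp add: algebra_simps)
  qed
  have tp: "1 + t > 0" using eps by simp
  have iter: "Phi (Suc k) \<le> Phi 1 / (1 + t) ^ k" for k
  proof (induction k)
    case 0 then show ?case by simp
  next
    case (Suc k)
    have "(1 + t) * Phi (Suc (Suc k)) \<le> Phi (Suc k)" using desc[of "Suc k"] by simp
    then have "Phi (Suc (Suc k)) \<le> Phi (Suc k) / (1 + t)" using tp by (simp add: field_simps)
    also have "\<dots> \<le> (Phi 1 / (1 + t) ^ k) / (1 + t)" by (rule divide_right_mono[OF Suc.IH]) (use tp in simp)
    finally show ?case by (simp add: field_simps)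
  qed
  have Phi1: "Phi 1 = (norm_S S (x 1 - xs))\<^sup>2 + 2 * inner (u 1) (x 1 - xs) + L 0 * (norm_S S (y 0 - x 0))\<^sup>2"
    unfolding Phi_def by simp
  have part1: "\<forall>k\<ge>1. (1 - L k) * (norm_S S (x (Suc k) - xs))\<^sup>2 \<le> Phi 1 / (1 + t) ^ k"
    using lower iter order_trans by blast
  define Lb where "Lb = (SUP k. L k)"
  have bdd: "bdd_above (range L)" by (rule bdd_aboveI[of _ 1]) (use Lk in \<open>auto simp: less_imp_le\<close>)
  have Lle: "L k \<le> Lb" for k unfolding Lb_def by (rule cSUP_upper[OF UNIV_I bdd])
  have Lb1: "1 - Lb > 0" using Lbar unfolding Lb_def by simp
  define K where "K = max 0 (Phi 1) / (1 - Lb)"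
  have K0: "K \<ge> 0" unfolding K_def using Lb1 by simp
  define q where "q = 1 / sqrt (1 + t)"
  have q0: "q > 0" unfolding q_def using tp by simp
  have q1: "q < 1" unfolding q_def using eps by simp
  have q2: "q\<^sup>2 = 1 / (1 + t)" unfolding q_def using tp by (simp add: power_divide)
  have bnd: "norm_S S (x (Suc k) - xs) \<le> sqrt K * q ^ k" if "k \<ge> 1" for k
  proof -
    define N where "N = norm_S S (x (Suc k) - xs)"
    have N0: "N \<ge> 0" unfolding N_def by (simp add: normS_nonneg[OF S])
    have "(1 - Lb) * N\<^sup>2 \<le> (1 - L k) * N\<^sup>2" using Lle[of k] by (simp add: mult_right_mono)
    also have "\<dots> \<le> Phi 1 / (1 + t) ^ k" using part1 that unfolding N_def by blast
    also have "\<dots> \<le> max 0 (Phi 1) / (1 + t) ^ k" using tp by (simp add: divide_right_mono)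
    finally have h: "(1 - Lb) * N\<^sup>2 \<le> max 0 (Phi 1) / (1 + t) ^ k" .
    have "N\<^sup>2 \<le> max 0 (Phi 1) / (1 + t) ^ k / (1 - Lb)" by (subst pos_le_divide_eq[OF Lb1]) (metis h mult.commute)
    also have "\<dots> = K * (q\<^sup>2) ^ k" unfolding K_def q2 by (rule aux1)
    also have "\<dots> = (sqrt K * q ^ k)\<^sup>2" using K0 by (rule aux2)
    finally have "N\<^sup>2 \<le> (sqrt K * q ^ k)\<^sup>2" .
    then show ?thesis unfolding N_def[symmetric] using q0 K0 N0 aux3 by blast
  qed
  define c where "c = max (sqrt K / q) (max (norm_S S (x 0 - xs)) (norm_S S (x 1 - xs) / q))"
  have c0: "c \<ge> 0" unfolding c_def using K0 q0 by (simp add: le_max_iff_disj)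
  have all: "norm_S S (x k - xs) \<le> c * q ^ k" for k
  proof (cases k)
    case 0 then show ?thesis unfolding c_def by simp
  next
    case (Suc k')
    show ?thesis
    proof (cases k')
      case 0
      have "norm_S S (x 1 - xs) = (norm_S S (x 1 - xs) / q) * q" using q0 by simp
      also have "\<dots> \<le> c * q" unfolding c_def using q0 by (intro mult_right_mono) simp_all
      finally show ?thesis using Suc 0 by simp
    next
      case (Suc j)
      have "norm_S S (x k - xs) \<le> sqrt K * q ^ k'" using bnd[of k'] Suc \<open>k = Suc k'\<close> by simp
      also have "\<dots> = (sqrt K / q) * q ^ k" using \<open>k = Suc k'\<close> q0 by simp
      also have "\<dots> \<le> c * q ^ k" unfolding c_def using q0 by (intro mult_right_mono) simp_all
      finally show ?thesis .
    qed
  qed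
  show ?thesis using part1 Phi1 c0 q0 q1 all by auto
qed

end
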